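(* Let $i\ge2$, $j\ge1$ and $k\ge1$ be integers and let $x=(10)^i0(10)^j0(10)^k$. Then $[x]_2\notin R$.
   Context: Stern's sequence $(a(n))_{n\ge0}$: $a(0)=0$, $a(1)=1$, $a(2n)=a(n)$, $a(2n+1)=a(n)+a(n+1)$; $s(n)=a(n+1)$. $R$ is the set of record-setters of $s$, i.e. indices $v\ge0$ with $s(i)<s(v)$ for all $i<v$. For a binary string $x$, $[x]_2$ is the integer it represents in base 2; $x^i$ denotes $i$-fold concatenation. *)

theory Defs
  imports Main
begin

function stern :: "nat \<Rightarrow> nat" where
  "stern n = (if n = 0 then 0 else if n = 1 then 1
              else if even n then stern (n div 2)
              else stern (n div 2) + stern (n div 2 + 1))"
  by auto
termination by (relation "measure id") (auto elim!: oddE)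

definition s :: "nat \<Rightarrow> nat" where
  "s n = stern (n + 1)"

definition R :: "nat set" where
  "R = {v. \<forall>i<v. s i < s v}"

definition bin_val :: "nat list \<Rightarrow> nat" where
  "bin_val xs = foldl (\<lambda>acc d. 2 * acc + d) 0 xs"

definition pow_str :: "nat list \<Rightarrow> nat \<Rightarrow> nat list" where
  "pow_str x i = concat (replicate i x)"

end

theory Submission
  imports Defs
begin

declare stern.simps[simp del]

lemma stern_even: "stern (2*n) = stern n"
proof (cases "n = 0")
  case True then show ?thesis by (simp add: stern.simps)
next
  case False then show ?thesis by (subst stern.simps) auto
qed

lemma stern_odd: "stern (2*n+1) = stern n + stern (n+1)"
proof (cases "n = 0")
  case True then show ?thesis by (simp add: stern.simps)
next
  case False then show ?thesis by (subst stern.simps) auto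
qed

lemma bin_val_snoc: "bin_val (xs@[d]) = 2 * bin_val xs + d"
  by (simp add: bin_val_def)

lemma bin_val_nil: "bin_val [] = 0" by (simp add: bin_val_def)

lemma bin_val_append: "bin_val (xs@ys) = bin_val xs * 2^length ys + bin_val ys"
proof (induction ys rule: rev_induct)
  case Nil then show ?case by (simp add: bin_val_nil)
next
  case (snoc y ys)
  have "bin_val (xs @ ys @ [y]) = 2 * bin_val (xs@ys) + y"
    using bin_val_snoc[of "xs@ys" y] by simp
  then show ?case using snoc by (simp add: bin_val_snoc algebra_simps)
qed

lemma bin_val_less: "set ys \<subseteq> {0,1} \<Longrightarrow> bin_val ys < 2^length ys"
proof (induction ys rule: rev_induct)
  case Nil then show ?case by (simp add: bin_val_nil)
next
  case (snoc y ys)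
  then have "bin_val ys < 2^length ys" "y \<le> 1" by auto
  then show ?case by (simp add: bin_val_snoc)
qed

definition st :: "nat list \<Rightarrow> nat \<times> nat" where
  "st xs = (stern (bin_val xs), stern (bin_val xs + 1))"

lemma st0: "st (xs@[0]) = (fst (st xs), fst (st xs) + snd (st xs))"
  using stern_even[of "bin_val xs"] stern_odd[of "bin_val xs"]
  by (simp add: st_def bin_val_snoc)

lemma st1: "st (xs@[1]) = (fst (st xs) + snd (st xs), snd (st xs))"
  using stern_even[of "bin_val xs + 1"] stern_odd[of "bin_val xs"]
  by (simp add: st_def bin_val_snoc)

lemma st_nil: "st [] = (0, 1)"
  by (simp add: st_def bin_val_nil stern.simps)

lemma pow_str_Suc: "pow_str x (Suc n) = pow_str x n @ x"
  by (simp add: pow_str_def replicate_append_same[symmetric])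

lemma blk: "\<exists>\<alpha> \<beta> \<gamma>. \<alpha> + \<beta> = \<gamma> \<and> \<beta> \<le> \<gamma> \<and> (n \<ge> 1 \<longrightarrow> \<gamma> \<le> 2*\<beta>) \<and>
   (\<forall>xs. st (xs @ pow_str [1,0] n) =
      (\<alpha> * fst (st xs) + \<beta> * snd (st xs), \<beta> * fst (st xs) + \<gamma> * snd (st xs)))"
proof (induction n)
  case 0
  show ?case by (rule exI[of _ 1], rule exI[of _ 0], rule exI[of _ 1]) (simp add: pow_str_def)
next
  case (Suc n)
  then obtain \<alpha> \<beta> \<gamma> where H: "\<alpha> + \<beta> = \<gamma>" "\<beta> \<le> \<gamma>"
    "\<forall>xs. st (xs @ pow_str [1,0] n) =
      (\<alpha> * fst (st xs) + \<beta> * snd (st xs), \<beta> * fst (st xs) + \<gamma> * snd (st xs))" by blast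
  have "st (xs @ pow_str [1,0] (Suc n)) =
      ((\<alpha>+\<beta>) * fst (st xs) + (\<beta>+\<gamma>) * snd (st xs), (\<beta>+\<gamma>) * fst (st xs) + (\<beta>+2*\<gamma>) * snd (st xs))" for xs
  proof -
    have "st (xs @ pow_str [1,0] (Suc n)) = st (((xs @ pow_str [1,0] n) @ [1]) @ [0])"
      by (simp add: pow_str_Suc)
    also have "\<dots> = ((\<alpha>+\<beta>) * fst (st xs) + (\<beta>+\<gamma>) * snd (st xs), (\<beta>+\<gamma>) * fst (st xs) + (\<beta>+2*\<gamma>) * snd (st xs))"
      unfolding st0 st1 using H(3) H(1)[symmetric] by (simp add: algebra_simps)
    finally show ?thesis .
  qed
  then show ?case using H(1,2)
    by (intro exI[of _ "\<alpha>+\<beta>"] exI[of _ "\<beta>+\<gamma>"] exI[of _ "\<beta>+2*\<gamma>"]) auto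
qed

lemma key_ineq:
  fixes a b \<alpha>1 \<beta>1 \<gamma>1 \<beta>2 \<gamma>2 :: nat
  assumes "b \<le> 2*a" "\<alpha>1 + \<beta>1 = \<gamma>1" "\<gamma>2 \<le> 2*\<beta>2"
  shows "2*\<gamma>1*\<gamma>2*b \<le> (\<beta>2+\<gamma>2)*((\<beta>1+2*\<gamma>1)*a + \<alpha>1*b)"
proof -
  obtain r where r: "2*a = b + r" using assms(1) le_Suc_ex by (metis add.commute le_add_diff_inverse)
  obtain t where t: "2*\<beta>2 = \<gamma>2 + t" using assms(3) by (metis le_add_diff_inverse)
  have "4*(\<beta>2+\<gamma>2)*((\<beta>1+2*\<gamma>1)*a + \<alpha>1*b) = (3*\<gamma>2+t)*((\<beta>1+2*\<gamma>1)*(2*a) + 2*\<alpha>1*b)"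
  proof -
    have "4*(\<beta>2+\<gamma>2) = (3*\<gamma>2+t)*2" using t by simp
    then show ?thesis by (metis (no_types, lifting) mult.assoc mult.commute distrib_left mult_2)
  qed
  also have "\<dots> = (3*\<gamma>2+t)*((3*\<beta>1+4*\<alpha>1)*b + (3*\<beta>1+2*\<alpha>1)*r)"
    using r assms(2)[symmetric] by (simp add: algebra_simps)
  also have "\<dots> \<ge> (3*\<gamma>2)*((3*\<beta>1+4*\<alpha>1)*b)"
    by (intro mult_mono) auto
  finally have "(3*\<gamma>2)*((3*\<beta>1+4*\<alpha>1)*b) \<le> 4*(\<beta>2+\<gamma>2)*((\<beta>1+2*\<gamma>1)*a + \<alpha>1*b)" .
  moreover have "4*(2*\<gamma>1*\<gamma>2*b) \<le> (3*\<gamma>2)*((3*\<beta>1+4*\<alpha>1)*b)"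
    using assms(2)[symmetric] by (simp add: algebra_simps)
  ultimately show ?thesis by linarith
qed

lemma set_pow: "set (pow_str [1,0] n) \<subseteq> {0,1}"
  by (auto simp: pow_str_def)

lemma len_pow: "length (pow_str [1,0] n) = 2*n"
  by (induction n) (simp_all add: pow_str_def pow_str_Suc)

theorem mainTheorem17:
  fixes i j k :: nat
  assumes "i \<ge> 2" and "j \<ge> 1" and "k \<ge> 1"
  shows "bin_val (pow_str [1,0] i @ [0] @ pow_str [1,0] j @ [0] @ pow_str [1,0] k) \<notin> R"
proof
  define P where "P = pow_str [1,0::nat] (i-1)"
  define Qj where "Qj = pow_str [1,0::nat] j"
  define Qk where "Qk = pow_str [1,0::nat] k"
  have Pi: "pow_str [1,0] i = P @ [1,0]"
  proof -
    have "i = Suc (i-1)" using assms(1) by simp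
    then have "pow_str [1,0::nat] i = pow_str [1,0] (Suc (i-1))" by simp
    then show ?thesis using pow_str_Suc[of "[1,0::nat]" "i-1"] unfolding P_def by metis
  qed
  define x where "x = pow_str [1,0] i @ [0] @ pow_str [1,0] j @ [0] @ pow_str [1,0::nat] k"
  define y where "y = P @ [0,1,0] @ Qj @ Qk @ [0::nat]"
  assume "bin_val x \<in> R"
  then have rec: "\<forall>v<bin_val x. s v < s (bin_val x)" by (simp add: R_def x_def)
  have xe: "x = P @ ([1] @ [0] @ [0] @ Qj @ [0] @ Qk)" unfolding x_def Pi Qj_def Qk_def by simp
  have ye: "y = P @ ([0] @ [1,0] @ Qj @ Qk @ [0])" by (simp add: y_def)
  have lx: "length ([0::nat] @ [0] @ Qj @ [0] @ Qk) = length ([1,0::nat] @ Qj @ Qk @ [0])"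
    by (simp add: Qj_def Qk_def len_pow)
  have sy: "set ([1,0::nat] @ Qj @ Qk @ [0]) \<subseteq> {0,1}"
    using set_pow[of j] set_pow[of k] by (auto simp: Qj_def Qk_def)
  have "bin_val ([0] @ [1,0] @ Qj @ Qk @ [0]) < bin_val ([1] @ [0] @ [0] @ Qj @ [0] @ Qk)"
  proof -
    have "bin_val ([0] @ [1,0] @ Qj @ Qk @ [0]) = bin_val ([1,0::nat] @ Qj @ Qk @ [0])"
      using bin_val_append[of "[0]" "[1,0::nat] @ Qj @ Qk @ [0]"] by (simp add: bin_val_def)
    also have "\<dots> < 2 ^ length ([1,0::nat] @ Qj @ Qk @ [0])" using bin_val_less[OF sy] .
    also have "\<dots> \<le> bin_val ([1] @ [0] @ [0] @ Qj @ [0] @ Qk)"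
      using bin_val_append[of "[1]" "[0::nat] @ [0] @ Qj @ [0] @ Qk"] lx by (simp add: bin_val_def)
    finally show ?thesis .
  qed
  then have lt: "bin_val y < bin_val x"
    unfolding xe ye bin_val_append using lx by simp
  obtain \<alpha>0 \<beta>0 \<gamma>0 where B0: "\<gamma>0 \<le> 2*\<beta>0"
    "\<forall>xs. st (xs @ P) = (\<alpha>0 * fst (st xs) + \<beta>0 * snd (st xs), \<beta>0 * fst (st xs) + \<gamma>0 * snd (st xs))"
  proof -
    obtain \<alpha> \<beta> \<gamma> where H: "\<alpha> + \<beta> = \<gamma>" "\<beta> \<le> \<gamma>" "(i-1 \<ge> 1 \<longrightarrow> \<gamma> \<le> 2*\<beta>)"
      "\<forall>xs. st (xs @ P) = (\<alpha> * fst (st xs) + \<beta> * snd (st xs), \<beta> * fst (st xs) + \<gamma> * snd (st xs))"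
      using blk[of "i-1"] unfolding P_def by blast
    have "\<gamma> \<le> 2*\<beta>" using H(3) assms(1) by simp
    then show ?thesis using that H(4) by blast
  qed
  obtain \<alpha>1 \<beta>1 \<gamma>1 where B1: "\<alpha>1 + \<beta>1 = \<gamma>1"
    "\<forall>xs. st (xs @ Qj) = (\<alpha>1 * fst (st xs) + \<beta>1 * snd (st xs), \<beta>1 * fst (st xs) + \<gamma>1 * snd (st xs))"
    using blk[of j] unfolding Qj_def by blast
  obtain \<alpha>2 \<beta>2 \<gamma>2 where B2: "\<alpha>2 + \<beta>2 = \<gamma>2" "\<gamma>2 \<le> 2*\<beta>2"
    "\<forall>xs. st (xs @ Qk) = (\<alpha>2 * fst (st xs) + \<beta>2 * snd (st xs), \<beta>2 * fst (st xs) + \<gamma>2 * snd (st xs))"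
  proof -
    obtain \<alpha> \<beta> \<gamma> where H: "\<alpha> + \<beta> = \<gamma>" "\<beta> \<le> \<gamma>" "(k \<ge> 1 \<longrightarrow> \<gamma> \<le> 2*\<beta>)"
      "\<forall>xs. st (xs @ Qk) = (\<alpha> * fst (st xs) + \<beta> * snd (st xs), \<beta> * fst (st xs) + \<gamma> * snd (st xs))"
      using blk[of k] unfolding Qk_def by blast
    have "\<gamma> \<le> 2*\<beta>" using H(3) assms(3) by simp
    then show ?thesis using that H(1,4) by blast
  qed
  have stP: "st P = (\<beta>0, \<gamma>0)" using B0(2)[rule_format, of "[]"] by (simp add: st_nil)
  define a where "a = \<beta>0"
  define b where "b = \<gamma>0"
  have x2: "x = (((((P @ [1]) @ [0]) @ [0]) @ Qj) @ [0]) @ Qk" by (simp add: xe)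
  have y2: "y = (((((P @ [0]) @ [1]) @ [0]) @ Qj) @ Qk) @ [0]" by (simp add: ye)
  define E where "E = a + b"
  define F where "F = 2*a + 3*b"
  define e where "e = \<alpha>1 * E + \<beta>1 * F"
  define f where "f = \<beta>1 * E + \<gamma>1 * F"
  have sx: "snd (st x) = \<beta>2 * e + \<gamma>2 * (e + f)"
  proof -
    have "st (((P @ [1]) @ [0]) @ [0]) = (E, F)"
      unfolding st0 st1 stP by (simp add: E_def F_def a_def b_def)
    then have "st ((((P @ [1]) @ [0]) @ [0]) @ Qj) = (e, f)"
      unfolding B1(2)[rule_format] using \<open>st (((P @ [1]) @ [0]) @ [0]) = (E, F)\<close> by (simp add: e_def f_def)
    then have "st (((((P @ [1]) @ [0]) @ [0]) @ Qj) @ [0]) = (e, e + f)" unfolding st0 by simp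
    then show ?thesis unfolding x2 B2(3)[rule_format] by simp
  qed
  define E' where "E' = 2*a + b"
  define F' where "F' = 3*a + 2*b"
  define e' where "e' = \<alpha>1 * E' + \<beta>1 * F'"
  define f' where "f' = \<beta>1 * E' + \<gamma>1 * F'"
  have sy: "snd (st y) = \<gamma>2 * e' + (\<beta>2 + \<gamma>2) * f'"
  proof -
    have "st (((P @ [0]) @ [1]) @ [0]) = (E', F')"
      unfolding st0 st1 stP by (simp add: E'_def F'_def a_def b_def)
    then have "st ((((P @ [0]) @ [1]) @ [0]) @ Qj) = (e', f')"
      unfolding B1(2)[rule_format] using \<open>st (((P @ [0]) @ [1]) @ [0]) = (E', F')\<close> by (simp add: e'_def f'_def)
    then have "st (((((P @ [0]) @ [1]) @ [0]) @ Qj) @ Qk) = (\<alpha>2 * e' + \<beta>2 * f', \<beta>2 * e' + \<gamma>2 * f')"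
      unfolding B2(3)[rule_format] using \<open>st ((((P @ [0]) @ [1]) @ [0]) @ Qj) = (e', f')\<close> by simp
    then show ?thesis unfolding y2 st0 using B2(1)[symmetric] by (simp add: algebra_simps)
  qed
  have ident: "snd (st y) + 2*\<gamma>1*\<gamma>2*b = snd (st x) + (\<beta>2+\<gamma>2)*((\<beta>1+2*\<gamma>1)*a + \<alpha>1*b)"
    unfolding sx sy e_def f_def e'_def f'_def E_def F_def E'_def F'_def
    using B1(1)[symmetric] by (simp add: algebra_simps)
  have "2*\<gamma>1*\<gamma>2*b \<le> (\<beta>2+\<gamma>2)*((\<beta>1+2*\<gamma>1)*a + \<alpha>1*b)"
    using key_ineq[of b a \<alpha>1 \<beta>1 \<gamma>1 \<gamma>2 \<beta>2] B0(1) B1(1) B2(2) by (simp add: a_def b_def)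
  then have "snd (st x) \<le> snd (st y)" using ident by linarith
  then have "s (bin_val x) \<le> s (bin_val y)" by (simp add: s_def st_def)
  with rec lt show False by (meson leD)
qed

end
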